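(* Let $R$ be a commutative ring with identity. Then the cozero-divisor graph $\Gamma'(R)$ is planar if and only if $\Gamma''_I(R)$ is planar for every ideal $I$ of $R$.
   Context: $\Gamma'(R)$ is the simple undirected graph whose vertices are the nonzero non-unit elements of $R$, with distinct vertices $x,y$ adjacent if and only if $x\notin yR$ and $y\notin xR$. For an ideal $I$ of $R$, $\Gamma''_I(R)$ is the simple undirected graph whose vertex set is $\{x\in R\setminus I : xR+I\neq R\}$, with distinct vertices $x,y$ adjacent if and only if $x\notin yR+I$ and $y\notin xR+I$. A graph is planar if it can be drawn in the plane with edges meeting only at their endpoints. *)

theory Defs
  imports "HOL-Analysis.Analysis"
begin

text \<open>Simple undirected graphs: a vertex set V and an edge relation E
  (assumed symmetric and irreflexive on V by construction below).\<close>

text \<open>Vertices go injectively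
  to points; each edge {x,y} is drawn as an arc from the point of x to the point
  of y (the drawing of an unordered edge is chosen once: the arc for (y,x)
  is the reverse of that for (x,y)); an arc meets no vertex point other than
  its endpoints; and arcs of distinct edges meet only at common endpoints.\<close>

definition planar :: "'a set \<Rightarrow> ('a \<Rightarrow> 'a \<Rightarrow> bool) \<Rightarrow> bool" where
  "planar V E \<longleftrightarrow>
    (\<exists>(p :: 'a \<Rightarrow> real^2) (\<gamma> :: 'a \<Rightarrow> 'a \<Rightarrow> real \<Rightarrow> real^2).
       inj_on p V \<and>
       (\<forall>x\<in>V. \<forall>y\<in>V. E x y \<longrightarrow>
          arc (\<gamma> x y) \<and> pathstart (\<gamma> x y) = p x \<and> pathfinish (\<gamma> x y) = p y \<and>
          \<gamma> y x = reversepath (\<gamma> x y) \<and>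
          path_image (\<gamma> x y) \<inter> p ` V \<subseteq> {p x, p y}) \<and>
       (\<forall>x\<in>V. \<forall>y\<in>V. \<forall>u\<in>V. \<forall>v\<in>V. E x y \<and> E u v \<and> {x, y} \<noteq> {u, v} \<longrightarrow>
          path_image (\<gamma> x y) \<inter> path_image (\<gamma> u v) \<subseteq> p ` ({x, y} \<inter> {u, v})))"

definition is_ideal :: "'r::comm_ring_1 set \<Rightarrow> bool" where
  "is_ideal I \<longleftrightarrow> 0 \<in> I \<and> (\<forall>a\<in>I. \<forall>b\<in>I. a + b \<in> I) \<and> (\<forall>a\<in>I. - a \<in> I)
      \<and> (\<forall>a\<in>I. \<forall>r. r * a \<in> I)"

definition pideal :: "'r::comm_ring_1 \<Rightarrow> 'r set" where
  "pideal x = {x * r | r. True}"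

definition pideal_plus :: "'r::comm_ring_1 \<Rightarrow> 'r set \<Rightarrow> 'r set" where
  "pideal_plus x I = {a + b | a b. a \<in> pideal x \<and> b \<in> I}"

definition cozero_vertices :: "'r::comm_ring_1 set" where
  "cozero_vertices = {x. x \<noteq> 0 \<and> \<not> x dvd 1}"

definition cozero_adj :: "'r::comm_ring_1 \<Rightarrow> 'r \<Rightarrow> bool" where
  "cozero_adj x y \<longleftrightarrow> x \<noteq> y \<and> x \<notin> pideal y \<and> y \<notin> pideal x"

definition cozeroI_vertices :: "'r::comm_ring_1 set \<Rightarrow> 'r set" where
  "cozeroI_vertices I = {x. x \<notin> I \<and> pideal_plus x I \<noteq> UNIV}"

definition cozeroI_adj :: "'r::comm_ring_1 set \<Rightarrow> 'r \<Rightarrow> 'r \<Rightarrow> bool" where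
  "cozeroI_adj I x y \<longleftrightarrow> x \<noteq> y \<and> x \<notin> pideal_plus y I \<and> y \<notin> pideal_plus x I"

end

theory Submission
  imports Defs
begin

lemma planar_mono:
  assumes "planar V E" "V' \<subseteq> V" "\<And>x y. x \<in> V' \<Longrightarrow> y \<in> V' \<Longrightarrow> E' x y \<Longrightarrow> E x y"
  shows "planar V' E'"
proof -
  obtain p :: "'a \<Rightarrow> real^2" and \<gamma> :: "'a \<Rightarrow> 'a \<Rightarrow> real \<Rightarrow> real^2" where h: "inj_on p V"
    "\<forall>x\<in>V. \<forall>y\<in>V. E x y \<longrightarrow>
          arc (\<gamma> x y) \<and> pathstart (\<gamma> x y) = p x \<and> pathfinish (\<gamma> x y) = p y \<and>
          \<gamma> y x = reversepath (\<gamma> x y) \<and>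
          path_image (\<gamma> x y) \<inter> p ` V \<subseteq> {p x, p y}"
    "\<forall>x\<in>V. \<forall>y\<in>V. \<forall>u\<in>V. \<forall>v\<in>V. E x y \<and> E u v \<and> {x, y} \<noteq> {u, v} \<longrightarrow>
          path_image (\<gamma> x y) \<inter> path_image (\<gamma> u v) \<subseteq> p ` ({x, y} \<inter> {u, v})"
    using assms(1) unfolding planar_def by (elim exE conjE) (rule that)
  have "inj_on p V'" using h(1) assms(2) inj_on_subset by blast
  moreover have "\<forall>x\<in>V'. \<forall>y\<in>V'. E' x y \<longrightarrow>
          arc (\<gamma> x y) \<and> pathstart (\<gamma> x y) = p x \<and> pathfinish (\<gamma> x y) = p y \<and>
          \<gamma> y x = reversepath (\<gamma> x y) \<and>
          path_image (\<gamma> x y) \<inter> p ` V' \<subseteq> {p x, p y}"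
  proof (intro ballI impI)
    fix x y assume xy: "x \<in> V'" "y \<in> V'" "E' x y"
    then have "E x y" "x \<in> V" "y \<in> V" using assms by auto
    with h(2) have "arc (\<gamma> x y) \<and> pathstart (\<gamma> x y) = p x \<and> pathfinish (\<gamma> x y) = p y \<and>
          \<gamma> y x = reversepath (\<gamma> x y) \<and>
          path_image (\<gamma> x y) \<inter> p ` V \<subseteq> {p x, p y}" by blast
    then show "arc (\<gamma> x y) \<and> pathstart (\<gamma> x y) = p x \<and> pathfinish (\<gamma> x y) = p y \<and>
          \<gamma> y x = reversepath (\<gamma> x y) \<and>
          path_image (\<gamma> x y) \<inter> p ` V' \<subseteq> {p x, p y}" using assms(2) by blast
  qed
  moreover have "\<forall>x\<in>V'. \<forall>y\<in>V'. \<forall>u\<in>V'. \<forall>v\<in>V'. E' x y \<and> E' u v \<and> {x, y} \<noteq> {u, v} \<longrightarrow>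
          path_image (\<gamma> x y) \<inter> path_image (\<gamma> u v) \<subseteq> p ` ({x, y} \<inter> {u, v})"
  proof (intro ballI impI)
    fix x y u v assume m: "x \<in> V'" "y \<in> V'" "u \<in> V'" "v \<in> V'"
      and c: "E' x y \<and> E' u v \<and> {x, y} \<noteq> {u, v}"
    have "x \<in> V" "y \<in> V" "u \<in> V" "v \<in> V" using m assms(2) by auto
    moreover have "E x y" "E u v" using c m assms(3) by auto
    ultimately show "path_image (\<gamma> x y) \<inter> path_image (\<gamma> u v) \<subseteq> p ` ({x, y} \<inter> {u, v})"
      using h(3) c by blast
  qed
  ultimately show ?thesis unfolding planar_def by (intro exI[of _ p] exI[of _ \<gamma>] conjI)
qed

theorem proposition3p1:
  shows "planar (cozero_vertices :: 'r::comm_ring_1 set) cozero_adj \<longleftrightarrow>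
         (\<forall>I :: 'r set. is_ideal I \<longrightarrow> planar (cozeroI_vertices I) (cozeroI_adj I))"
proof
  assume P: "planar (cozero_vertices :: 'r set) cozero_adj"
  show "\<forall>I :: 'r set. is_ideal I \<longrightarrow> planar (cozeroI_vertices I) (cozeroI_adj I)"
  proof (intro allI impI)
    fix I :: "'r set" assume I: "is_ideal I"
    have sub: "pideal x \<subseteq> pideal_plus x I" for x :: 'r
      using I unfolding pideal_plus_def is_ideal_def by force
    have "cozeroI_vertices I \<subseteq> cozero_vertices"
    proof
      fix x assume x: "x \<in> cozeroI_vertices I"
      have "x \<noteq> 0" using x I unfolding cozeroI_vertices_def is_ideal_def by auto
      moreover have "\<not> x dvd 1"
      proof
        assume "x dvd 1"
        then obtain k where k: "1 = x * k" by (auto elim: dvdE)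
        have "pideal x = UNIV"
        proof (rule set_eqI, simp)
          fix z :: 'r show "z \<in> pideal x" unfolding pideal_def
            by (rule CollectI, rule exI[of _ "k * z"]) (simp add: mult.assoc[symmetric] k[symmetric])
        qed
        then show False using x sub[of x] unfolding cozeroI_vertices_def by auto
      qed
      ultimately show "x \<in> cozero_vertices" unfolding cozero_vertices_def by auto
    qed
    moreover have "cozeroI_adj I x y \<Longrightarrow> cozero_adj x y" for x y
      using sub unfolding cozeroI_adj_def cozero_adj_def by blast
    ultimately show "planar (cozeroI_vertices I) (cozeroI_adj I)"
      by (rule planar_mono[OF P]) auto
  qed
next
  assume A: "\<forall>I :: 'r set. is_ideal I \<longrightarrow> planar (cozeroI_vertices I) (cozeroI_adj I)"
  have "is_ideal ({0} :: 'r set)" unfolding is_ideal_def by auto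
  with A have P: "planar (cozeroI_vertices ({0}::'r set)) (cozeroI_adj {0})" by blast
  have eq: "pideal_plus x {0} = pideal x" for x :: 'r
    unfolding pideal_plus_def by auto
  have "cozero_vertices \<subseteq> cozeroI_vertices ({0}::'r set)"
  proof
    fix x :: 'r assume x: "x \<in> cozero_vertices"
    have "1 \<notin> pideal x"
    proof
      assume "1 \<in> pideal x"
      then obtain r where "1 = x * r" unfolding pideal_def by auto
      then have "x dvd 1" by (rule dvdI)
      then show False using x unfolding cozero_vertices_def by auto
    qed
    then show "x \<in> cozeroI_vertices {0}" using x eq[of x]
      unfolding cozeroI_vertices_def cozero_vertices_def by auto
  qed
  moreover have "cozero_adj x y \<Longrightarrow> cozeroI_adj {0} x y" for x y :: 'r
    using eq unfolding cozeroI_adj_def cozero_adj_def by auto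
  ultimately show "planar (cozero_vertices :: 'r set) cozero_adj"
    by (rule planar_mono[OF P]) auto
qed

end
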